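(* Assume $\int_{(0,1)}\upsilon^p\lambda(d\upsilon)<\infty$ for some $p\in(1,2)$. Then for every $q\ge1$ there is a constant $\mathbf C_q$ such that for every $m\ge1$ and every $h\in(0,1)$, $$\int_{(0,q)^m}\mathbf 1_{\{\prod_{j=1}^m u_j\le h\,q^m\}}\prod_{i=1}^m u_i^2\,\lambda(du_i)\le h^{2-p}(\mathbf C_q)^m\sum_{\ell=1}^m\frac{(2-p)^{-\ell}}{(m-\ell)!}\big[\log(1/h)\big]^{m-\ell}.$$ In particular, for every $\varepsilon\in(0,2-p)$, $$\int_{(0,q)^m}\mathbf 1_{\{\prod_{j=1}^m u_j\le h\,q^m\}}\prod_{i=1}^m u_i^2\,\lambda(du_i)\le\frac{(\mathbf C_q/\varepsilon)^m}{2-p-\varepsilon}\,h^{2-p-\varepsilon}.$$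
   Context: $\lambda$ is a positive measure on $(0,\infty)$ with $\lambda([a,\infty))<\infty$ for every $a>0$. *)

theory Defs
  imports "HOL-Probability.Probability"
begin

definition small_prod_integral :: "real measure \<Rightarrow> real \<Rightarrow> nat \<Rightarrow> real \<Rightarrow> ennreal" where
  "small_prod_integral lam q m h =
     (\<integral>\<^sup>+ u. indicator {u. (\<forall>i\<in>{1..m}. u i \<in> {0<..<q}) \<and> (\<Prod>j\<in>{1..m}. u j) \<le> h * q ^ m} u
              * ennreal (\<Prod>i\<in>{1..m}. (u i)\<^sup>2)
        \<partial>(PiM {1..m} (\<lambda>_. lam)))"

end

theory Submission
  imports Defs
begin

lemma main_bound:
  fixes lam :: "real measure" and p q h :: real and m :: nat
  assumes sets_lam: "sets lam = sets borel"
    and supp: "emeasure lam {..0} = 0"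
    and tail: "\<And>a. a > 0 \<Longrightarrow> emeasure lam {a..} < \<infinity>"
    and p: "1 < p" "p < 2"
    and moment: "(\<integral>\<^sup>+ v \<in> {0<..<1}. ennreal (v powr p) \<partial>lam) < \<infinity>"
    and q: "q \<ge> 1" and h: "0 < h"
  shows "small_prod_integral lam q m h \<le>
    ennreal (h powr (2 - p) * (q powr (2 - p) * enn2real (\<integral>\<^sup>+ x. indicator {0<..<q} x * ennreal (x powr p) \<partial>lam)) ^ m)"
proof -
  note [measurable_cong] = sets_lam
  have sp: "space lam = UNIV" using sets_eq_imp_space_eq[OF sets_lam] by simp
  have sf: "sigma_finite_measure lam"
  proof
    let ?A = "insert {..0::real} (range (\<lambda>n::nat. {1 / real (Suc n)..}))"
    have "\<Union>?A = UNIV"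
    proof safe
      fix x :: real
      show "x \<in> \<Union>?A"
      proof (cases "x \<le> 0")
        case False
        then obtain n where "inverse (real (Suc n)) < x" using reals_Archimedean[of x] by auto
        then have "x \<in> {1 / real (Suc n)..}" by (simp add: field_simps inverse_eq_divide)
        then show ?thesis by blast
      qed auto
    qed auto
    moreover have "\<forall>a\<in>?A. emeasure lam a \<noteq> \<infinity>"
    proof
      fix a assume "a \<in> ?A"
      then show "emeasure lam a \<noteq> \<infinity>"
      proof
        assume "a \<in> range (\<lambda>n::nat. {1 / real (Suc n)..})"
        then obtain n :: nat where "a = {1 / real (Suc n)..}" by auto
        then show ?thesis using tail[of "1 / real (Suc n)"] by simp
      qed (use supp in simp)
    qed
    moreover have "?A \<subseteq> sets lam" unfolding sets_lam by auto
    moreover have "countable ?A" by simp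
    ultimately show "\<exists>A. countable A \<and> A \<subseteq> sets lam \<and> \<Union> A = space lam \<and> (\<forall>a\<in>A. emeasure lam a \<noteq> \<infinity>)"
      unfolding sp by blast
  qed
  interpret product_sigma_finite "\<lambda>_. lam" unfolding product_sigma_finite_def using sf by auto
  define g where "g x = indicator {0<..<q} x * ennreal (x powr p)" for x :: real
  have gm: "g \<in> borel_measurable lam" unfolding g_def by measurable
  have gm'[measurable]: "g \<in> borel_measurable borel" unfolding g_def by measurable
  have gle: "g x \<le> indicator {0<..<1} x * ennreal (x powr p) + ennreal (q powr p) * indicator {1..} x" for x
  proof (cases "x \<in> {0<..<q}")
    case True
    show ?thesis
    proof (cases "x < 1")
      case False
      then have "x powr p \<le> q powr p" using True p by (intro powr_mono2) auto
      then show ?thesis using True False by (auto simp: g_def indicator_def)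
    qed (use True in \<open>auto simp: g_def indicator_def\<close>)
  qed (auto simp: g_def)
  have "(\<integral>\<^sup>+ x. g x \<partial>lam) \<le> (\<integral>\<^sup>+ x. indicator {0<..<1} x * ennreal (x powr p) + ennreal (q powr p) * indicator {1..} x \<partial>lam)"
    by (intro nn_integral_mono gle)
  also have "\<dots> = (\<integral>\<^sup>+ x. indicator {0<..<1} x * ennreal (x powr p) \<partial>lam) + ennreal (q powr p) * emeasure lam {1..}"
    by (subst nn_integral_add) (auto simp: nn_integral_cmult_indicator sets_lam)
  also have "\<dots> < \<infinity>"
    using moment tail[of 1] by (auto simp: mult.commute ennreal_mult_less_top)
  finally have Kfin: "(\<integral>\<^sup>+ x. g x \<partial>lam) < \<infinity>" .
  define K where "K = enn2real (\<integral>\<^sup>+ x. g x \<partial>lam)"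
  have K: "(\<integral>\<^sup>+ x. g x \<partial>lam) = ennreal K" "K \<ge> 0"
    using Kfin unfolding K_def by (auto simp: less_top)
  have pw: "indicator {u. (\<forall>i\<in>{1..m}. u i \<in> {0<..<q}) \<and> (\<Prod>j\<in>{1..m}. u j) \<le> h * q ^ m} u
              * ennreal (\<Prod>i\<in>{1..m}. (u i)\<^sup>2)
      \<le> ennreal (h powr (2 - p) * (q powr (2 - p)) ^ m) * (\<Prod>i\<in>{1..m}. g (u i))" for u
  proof (cases "(\<forall>i\<in>{1..m}. u i \<in> {0<..<q}) \<and> (\<Prod>j\<in>{1..m}. u j) \<le> h * q ^ m")
    case True
    then have pos: "\<And>i. i \<in> {1..m} \<Longrightarrow> 0 < u i" by auto
    have gi: "(\<Prod>i\<in>{1..m}. g (u i)) = ennreal (\<Prod>i\<in>{1..m}. u i powr p)"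
      using True by (simp add: g_def prod_ennreal powr_ge_zero)
    have "(\<Prod>i\<in>{1..m}. (u i)\<^sup>2) = (\<Prod>i\<in>{1..m}. u i powr p * u i powr (2 - p))"
      using pos by (intro prod.cong refl) (simp add: powr_add[symmetric], subst powr_numeral, auto simp: less_imp_le)
    also have "\<dots> = (\<Prod>i\<in>{1..m}. u i powr p) * (\<Prod>i\<in>{1..m}. u i) powr (2 - p)"
      by (simp add: prod.distrib prod_powr_distrib)
    also have "\<dots> \<le> (\<Prod>i\<in>{1..m}. u i powr p) * (h * q ^ m) powr (2 - p)"
      using True pos p by (intro mult_left_mono powr_mono2 prod_nonneg) (auto intro: less_imp_le)
    also have "(h * q ^ m) powr (2 - p) = h powr (2 - p) * (q powr (2 - p)) ^ m"
    proof -
      have "(q ^ m) powr (2 - p) = (q powr real m) powr (2 - p)" using q by (simp add: powr_realpow)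
      also have "\<dots> = (q powr (2 - p)) ^ m" using q by (simp add: powr_powr powr_realpow[symmetric] mult.commute)
      finally show ?thesis using h q by (simp add: powr_mult)
    qed
    finally have "(\<Prod>i\<in>{1..m}. (u i)\<^sup>2) \<le> h powr (2 - p) * (q powr (2 - p)) ^ m * (\<Prod>i\<in>{1..m}. u i powr p)"
      by (simp add: mult.commute)
    then show ?thesis using True unfolding gi
      by (simp add: ennreal_mult[symmetric] prod_nonneg)
  qed simp
  have "small_prod_integral lam q m h \<le> (\<integral>\<^sup>+ u. ennreal (h powr (2 - p) * (q powr (2 - p)) ^ m) * (\<Prod>i\<in>{1..m}. g (u i)) \<partial>(PiM {1..m} (\<lambda>_. lam)))"
    unfolding small_prod_integral_def by (intro nn_integral_mono pw)
  also have "\<dots> = ennreal (h powr (2 - p) * (q powr (2 - p)) ^ m) * (\<integral>\<^sup>+ u. (\<Prod>i\<in>{1..m}. g (u i)) \<partial>(PiM {1..m} (\<lambda>_. lam)))"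
    using gm by (intro nn_integral_cmult) measurable
  also have "(\<integral>\<^sup>+ u. (\<Prod>i\<in>{1..m}. g (u i)) \<partial>(PiM {1..m} (\<lambda>_. lam))) = (\<Prod>i\<in>{1..m}. \<integral>\<^sup>+ x. g x \<partial>lam)"
    using product_nn_integral_prod[of "{1..m}" "\<lambda>_. g"] gm by simp
  also have "\<dots> = ennreal (K ^ m)" using K by (simp add: prod_ennreal ennreal_power)
  finally show ?thesis using K
    by (simp add: K_def g_def ennreal_mult[symmetric] power_mult_distrib mult_ac)
qed

theorem lemma4p8:
  fixes lam :: "real measure" and p :: real
  assumes sets_lam: "sets lam = sets borel"
    and supp: "emeasure lam {..0} = 0"
    and tail: "\<And>a. a > 0 \<Longrightarrow> emeasure lam {a..} < \<infinity>"
    and p: "1 < p" "p < 2"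
    and moment: "(\<integral>\<^sup>+ v \<in> {0<..<1}. ennreal (v powr p) \<partial>lam) < \<infinity>"
  shows "\<forall>q::real. q \<ge> 1 \<longrightarrow> (\<exists>C::real.
     (\<forall>m::nat. \<forall>h::real. m \<ge> 1 \<and> 0 < h \<and> h < 1 \<longrightarrow>
        small_prod_integral lam q m h
          \<le> ennreal (h powr (2 - p) * C ^ m *
               (\<Sum>l = 1..m. (2 - p) powr (- real l) / fact (m - l) * (ln (1 / h)) ^ (m - l)))) \<and>
     (\<forall>m::nat. \<forall>h::real. \<forall>\<epsilon>::real. m \<ge> 1 \<and> 0 < h \<and> h < 1 \<and> 0 < \<epsilon> \<and> \<epsilon> < 2 - p \<longrightarrow>
        small_prod_integral lam q m h
          \<le> ennreal ((C / \<epsilon>) ^ m / (2 - p - \<epsilon>) * h powr (2 - p - \<epsilon>))))"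
proof (intro allI impI)
  fix q :: real assume q: "q \<ge> 1"
  define C where "C = q powr (2 - p) * enn2real (\<integral>\<^sup>+ x. indicator {0<..<q} x * ennreal (x powr p) \<partial>lam)"
  have C0: "C \<ge> 0" unfolding C_def by simp
  have mb: "small_prod_integral lam q m h \<le> ennreal (h powr (2 - p) * C ^ m)" if "0 < h" for m h
    unfolding C_def using main_bound[OF sets_lam supp tail p moment q that] .
  show "\<exists>C::real.
     (\<forall>m::nat. \<forall>h::real. m \<ge> 1 \<and> 0 < h \<and> h < 1 \<longrightarrow>
        small_prod_integral lam q m h
          \<le> ennreal (h powr (2 - p) * C ^ m *
               (\<Sum>l = 1..m. (2 - p) powr (- real l) / fact (m - l) * (ln (1 / h)) ^ (m - l)))) \<and>
     (\<forall>m::nat. \<forall>h::real. \<forall>\<epsilon>::real. m \<ge> 1 \<and> 0 < h \<and> h < 1 \<and> 0 < \<epsilon> \<and> \<epsilon> < 2 - p \<longrightarrow>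
        small_prod_integral lam q m h
          \<le> ennreal ((C / \<epsilon>) ^ m / (2 - p - \<epsilon>) * h powr (2 - p - \<epsilon>)))"
  proof (intro exI[of _ C] conjI allI impI)
    fix m :: nat and h :: real
    assume a: "m \<ge> 1 \<and> 0 < h \<and> h < 1"
    define S where "S = (\<Sum>l = 1..m. (2 - p) powr (- real l) / fact (m - l) * (ln (1 / h)) ^ (m - l))"
    have L: "ln (1 / h) \<ge> 0" using a by simp
    have "(2 - p) powr (- real m) / fact (m - m) * (ln (1 / h)) ^ (m - m) \<le> S"
      unfolding S_def using a L by (intro member_le_sum) auto
    moreover have "(2 - p) powr (- real m) \<ge> 1"
    proof -
      have "(2 - p) powr real m = (2 - p) ^ m" using p by (simp add: powr_realpow)
      also have "\<dots> \<le> 1" using p by (intro power_le_one) auto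
      finally have "(2 - p) powr real m \<le> 1" .
      moreover have "0 < (2 - p) powr real m" using p by simp
      ultimately show ?thesis by (simp add: powr_minus one_le_inverse_iff)
    qed
    ultimately have S1: "S \<ge> 1" by simp
    have "h powr (2 - p) * C ^ m \<le> h powr (2 - p) * C ^ m * S"
    proof -
      have nn: "0 \<le> h powr (2 - p) * C ^ m" using C0 by simp
      show ?thesis using mult_left_mono[OF S1 nn] by simp
    qed
    then show "small_prod_integral lam q m h \<le> ennreal (h powr (2 - p) * C ^ m * S)"
      using mb[of h m] a by (meson ennreal_leI order_trans)
  next
    fix m :: nat and h e :: real
    assume a: "m \<ge> 1 \<and> 0 < h \<and> h < 1 \<and> 0 < e \<and> e < 2 - p"
    have "h powr (2 - p) \<le> h powr (2 - p - e)" using a by (intro powr_mono') auto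
    moreover have "C ^ m \<le> (C / e) ^ m"
    proof (intro power_mono)
      have "C * e \<le> C * 1" using a p C0 by (intro mult_left_mono) auto
      then show "C \<le> C / e" using a by (simp add: le_divide_eq)
    qed (use C0 in auto)
    moreover have "1 \<le> 1 / (2 - p - e)" using a p by (simp add: le_divide_eq)
    ultimately have "h powr (2 - p) * C ^ m \<le> (C / e) ^ m * (1 / (2 - p - e)) * h powr (2 - p - e)"
      using C0 a by (smt (verit, best) mult_mono mult_nonneg_nonneg powr_ge_zero zero_le_power mult_le_cancel_left1 mult.commute)
    then have "h powr (2 - p) * C ^ m \<le> (C / e) ^ m / (2 - p - e) * h powr (2 - p - e)" by simp
    then show "small_prod_integral lam q m h \<le> ennreal ((C / e) ^ m / (2 - p - e) * h powr (2 - p - e))"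
      using mb[of h m] a by (meson ennreal_leI order_trans)
  qed
qed

end
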